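(* For every integer $h\ge2$, the numerical semigroup $\Gamma_{A_h}=\langle h(h+1),\,h(h+1)+1,\,(h+1)^2,\,(h+1)^2+1\rangle$ is homogeneous.
   Context: For a numerical semigroup $\Gamma=\langle n_1,\dots,n_e\rangle$ (minimally generated, here with $n_1=h(h+1)$) and $0\neq s\in\Gamma$, the set of lengths is $\mathcal T(s)=\{\sum_i r_i : s=\sum_i r_in_i,\ r_i\in\mathbb{N}\}$. A subset $T\subset\Gamma$ is homogeneous if it is empty or $\mathcal T(s)$ is a singleton for all $0\neq s\in T$. $\Gamma$ is homogeneous if the Apéry set $\mathrm{Ap}(\Gamma,n_1)=\{s\in\Gamma: s-n_1\notin\Gamma\}$ is homogeneous. *)

theory Defs
  imports Main
begin

text \<open>A numerical semigroup is given by its (minimal) list of generators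
  ns = [n_1, ..., n_e].  A factorization of s is a list r of natural numbers
  of the same length with s = sum_i r_i n_i.\<close>

definition factorizations :: "nat list \<Rightarrow> nat \<Rightarrow> nat list set" where
  "factorizations ns s =
     {r. length r = length ns \<and> s = (\<Sum>i<length ns. r ! i * ns ! i)}"

definition semigroup_gen :: "nat list \<Rightarrow> nat set" where
  "semigroup_gen ns = {s. factorizations ns s \<noteq> {}}"

definition lengths :: "nat list \<Rightarrow> nat \<Rightarrow> nat set" where
  "lengths ns s = {sum_list r | r. r \<in> factorizations ns s}"

definition apery :: "nat list \<Rightarrow> nat set" where
  "apery ns = {s \<in> semigroup_gen ns.
                \<not> (hd ns \<le> s \<and> s - hd ns \<in> semigroup_gen ns)}"

definition homogeneous_set :: "nat list \<Rightarrow> nat set \<Rightarrow> bool" where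
  "homogeneous_set ns T \<longleftrightarrow>
     T = {} \<or> (\<forall>s\<in>T. s \<noteq> 0 \<longrightarrow> (\<exists>l. lengths ns s = {l}))"

definition homogeneous_semigroup :: "nat list \<Rightarrow> bool" where
  "homogeneous_semigroup ns \<longleftrightarrow> homogeneous_set ns (apery ns)"

end

theory Submission
  imports Defs
begin

lemma fact_iff:
  "r \<in> factorizations [A, A+1, B, B+1] s \<longleftrightarrow>
   (\<exists>x0 x1 x2 x3. r = [x0,x1,x2,x3] \<and> s = x0*A + x1*(A+1) + x2*B + x3*(B+1))"
proof
  assume "r \<in> factorizations [A, A+1, B, B+1] s"
  then have l: "length r = 4" and e: "s = r!0*A + r!1*(A+1) + r!2*B + r!3*(B+1)"
    by (auto simp: factorizations_def numeral_eq_Suc lessThan_Suc)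
  from l obtain x0 x1 x2 x3 where "r = [x0,x1,x2,x3]"
    by (auto simp: numeral_eq_Suc length_Suc_conv)
  with e show "\<exists>x0 x1 x2 x3. r = [x0,x1,x2,x3] \<and> s = x0*A + x1*(A+1) + x2*B + x3*(B+1)"
    by (auto simp: numeral_eq_Suc lessThan_Suc)
next
  assume "\<exists>x0 x1 x2 x3. r = [x0,x1,x2,x3] \<and> s = x0*A + x1*(A+1) + x2*B + x3*(B+1)"
  then show "r \<in> factorizations [A, A+1, B, B+1] s"
    by (auto simp: factorizations_def numeral_eq_Suc lessThan_Suc)
qed

lemma sg_iff:
  "s \<in> semigroup_gen [A, A+1, B, B+1] \<longleftrightarrow>
   (\<exists>x0 x1 x2 x3. s = x0*A + x1*(A+1) + x2*B + x3*(B+1))"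
  unfolding semigroup_gen_def using fact_iff by blast

lemma ap_bound:
  fixes h :: nat
  defines "A \<equiv> h * (h + 1)"
  defines "B \<equiv> (h + 1)^2"
  assumes h: "h \<ge> 2"
  assumes s: "s = x0*A + x1*(A+1) + x2*B + x3*(B+1)"
  assumes nap: "\<not> (\<exists>y0 y1 y2 y3. s = A + y0*A + y1*(A+1) + y2*B + y3*(B+1))"
  shows "x0 = 0 \<and> x1 + x2 + x3 \<le> h"
proof -
  have B: "B = A + h + 1" unfolding A_def B_def by (simp add: power2_eq_square algebra_simps)
  have x0: "x0 = 0"
  proof (rule ccontr)
    assume "x0 \<noteq> 0"
    then obtain y where "x0 = Suc y" by (cases x0) auto
    then have "s = A + y*A + x1*(A+1) + x2*B + x3*(B+1)" using s by simp
    with nap show False by blast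
  qed
  have c1: "x1 = 0 \<or> x2 = 0"
  proof (rule ccontr)
    assume "\<not> (x1 = 0 \<or> x2 = 0)"
    then obtain y1 y2 where "x1 = Suc y1" "x2 = Suc y2" by (cases x1; cases x2) auto
    then have "s = A + x0*A + y1*(A+1) + y2*B + (Suc x3)*(B+1)" using s B by (simp add: algebra_simps)
    with nap show False by blast
  qed
  have c2: "x2 + x3 < h"
  proof (rule ccontr)
    assume "\<not> x2 + x3 < h"
    define d where "d = min x3 h"
    define c where "c = h - d"
    have "c \<le> x2" "d \<le> x3" "c + d = h" using \<open>\<not> x2 + x3 < h\<close> unfolding c_def d_def by auto
    then obtain y2 y3 where y: "x2 = c + y2" "x3 = d + y3" by (metis le_add_diff_inverse)
    have "s = A + (x0 + c)*A + (x1 + d)*(A+1) + y2*B + y3*(B+1)"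
    proof -
      have e: "h = c + d" using \<open>c + d = h\<close> by simp
      have "c*B + d*(B+1) = A + c*A + d*(A+1)"
        unfolding B A_def e by (simp add: algebra_simps)
      then show ?thesis using s y by (simp add: algebra_simps)
    qed
    with nap show False by blast
  qed
  have c3: "x1 + x3 \<le> h"
  proof (rule ccontr)
    assume "\<not> x1 + x3 \<le> h"
    define b where "b = h + 1 - x3"
    have "x3 < h" using c2 by simp
    have "b \<le> x1" "b + x3 = h + 1" using \<open>\<not> x1 + x3 \<le> h\<close> \<open>x3 < h\<close> unfolding b_def by auto
    then obtain y1 where y: "x1 = b + y1" by (metis le_add_diff_inverse)
    define k where "k = h - x3 - 1"
    have k: "k + x3 + 1 = h" using \<open>x3 < h\<close> unfolding k_def by simp
    have "s = A + (x0 + k)*A + y1*(A+1) + (x2 + x3 + 1)*B + 0*(B+1)"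
    proof -
      have "b*(A+1) + x3*(B+1) = A + k*A + (x3+1)*B"
      proof -
        have e1: "h = k + x3 + 1" using k by simp
        have e2: "b = k + 2" using \<open>b + x3 = h + 1\<close> k by simp
        show ?thesis unfolding B A_def e1 e2 by (simp add: algebra_simps)
      qed
      then show ?thesis using s y by (simp add: algebra_simps)
    qed
    with nap show False by blast
  qed
  show ?thesis using x0 c1 c2 c3 by auto
qed

lemma len_eq_aux:
  fixes h :: nat
  defines "A \<equiv> h * (h + 1)"
  assumes h: "h \<ge> 2"
  assumes x: "s = x1*(A+1) + x2*(A+h+1) + x3*(A+h+2)" "x1 + x2 + x3 \<le> h"
  assumes y: "s = y1*(A+1) + y2*(A+h+1) + y3*(A+h+2)" "y1 + y2 + y3 \<le> h"
  shows "\<not> (x1 + x2 + x3 < y1 + y2 + y3)"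
proof
  assume lt: "x1 + x2 + x3 < y1 + y2 + y3"
  define L where "L = x1 + x2 + x3"
  define e where "e = x1 + x2*(h+1) + x3*(h+2)"
  have sx: "s = L*A + e" unfolding L_def e_def x(1) by (simp add: algebra_simps)
  have "e \<le> L*(h+2)" unfolding e_def L_def by (simp add: algebra_simps)
  have "L + 1 \<le> y1 + y2 + y3" using lt L_def by simp
  have "(y1+y2+y3)*A \<le> s" unfolding y(1) by (simp add: algebra_simps)
  then have "(L+1)*A \<le> s" using \<open>L + 1 \<le> y1 + y2 + y3\<close>
    by (meson le_trans mult_le_mono1)
  then have "A \<le> e" using sx by simp
  have "L + 1 \<le> h" using lt y(2) L_def by simp
  then obtain m where m: "h = L + 1 + m" by (metis le_add_diff_inverse)
  have "L*(h+2) < A" unfolding A_def m by (simp add: algebra_simps)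
  with \<open>e \<le> L*(h+2)\<close> \<open>A \<le> e\<close> show False by simp
qed

theorem mainTheorem5:
  fixes h :: nat
  assumes "h \<ge> 2"
  shows "homogeneous_semigroup
           [h * (h + 1), h * (h + 1) + 1, (h + 1)^2, (h + 1)^2 + 1]"
proof -
  define A where "A = h * (h + 1)"
  define B where "B = (h + 1)^2"
  have B: "B = A + h + 1" unfolding A_def B_def by (simp add: power2_eq_square algebra_simps)
  have key: "x0 = 0 \<and> x1 + x2 + x3 \<le> h"
    if "s \<in> apery [A, A+1, B, B+1]" "r \<in> factorizations [A, A+1, B, B+1] s"
       "r = [x0,x1,x2,x3]" for s r x0 x1 x2 x3
  proof -
    have s: "s = x0*A + x1*(A+1) + x2*B + x3*(B+1)" using that(2,3) fact_iff by auto
    have nap: "\<not> (\<exists>y0 y1 y2 y3. s = A + y0*A + y1*(A+1) + y2*B + y3*(B+1))"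
    proof
      assume "\<exists>y0 y1 y2 y3. s = A + y0*A + y1*(A+1) + y2*B + y3*(B+1)"
      then obtain y0 y1 y2 y3 where e: "s = A + y0*A + y1*(A+1) + y2*B + y3*(B+1)" by blast
      have "s - A = y0*A + y1*(A+1) + y2*B + y3*(B+1)" using e by simp
      then have "A \<le> s" "s - A \<in> semigroup_gen [A, A+1, B, B+1]"
        using e sg_iff by (simp, blast)
      with that(1) show False unfolding apery_def by simp
    qed
    show ?thesis using ap_bound[OF assms s[unfolded A_def B_def]] nap unfolding A_def B_def by blast
  qed
  have "\<exists>l. lengths [A, A+1, B, B+1] s = {l}" if sa: "s \<in> apery [A, A+1, B, B+1]" for s
  proof -
    from sa have "s \<in> semigroup_gen [A, A+1, B, B+1]" unfolding apery_def by simp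
    then obtain r0 where r0: "r0 \<in> factorizations [A, A+1, B, B+1] s"
      unfolding semigroup_gen_def by auto
    then obtain x0 x1 x2 x3 where rx: "r0 = [x0,x1,x2,x3]"
      and sx: "s = x0*A + x1*(A+1) + x2*B + x3*(B+1)" using fact_iff by blast
    have kx: "x0 = 0 \<and> x1 + x2 + x3 \<le> h" using key[OF sa r0 rx] .
    have "lengths [A, A+1, B, B+1] s = {sum_list r0}"
    proof (rule set_eqI, rule iffI)
      fix l assume "l \<in> lengths [A, A+1, B, B+1] s"
      then obtain r where r: "r \<in> factorizations [A, A+1, B, B+1] s" and l: "l = sum_list r"
        unfolding lengths_def by auto
      then obtain y0 y1 y2 y3 where ry: "r = [y0,y1,y2,y3]"
        and sy: "s = y0*A + y1*(A+1) + y2*B + y3*(B+1)" using fact_iff by blast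
      have ky: "y0 = 0 \<and> y1 + y2 + y3 \<le> h" using key[OF sa r ry] .
      have s1: "s = x1*(A+1) + x2*(A+h+1) + x3*(A+h+2)" using sx kx B by simp
      have s2: "s = y1*(A+1) + y2*(A+h+1) + y3*(A+h+2)" using sy ky B by simp
      have "\<not> (x1 + x2 + x3 < y1 + y2 + y3)"
        using len_eq_aux[OF assms s1[unfolded A_def] _ s2[unfolded A_def]] kx ky by blast
      moreover have "\<not> (y1 + y2 + y3 < x1 + x2 + x3)"
        using len_eq_aux[OF assms s2[unfolded A_def] _ s1[unfolded A_def]] kx ky by blast
      ultimately show "l \<in> {sum_list r0}" using l rx ry kx ky by simp
    next
      fix l assume "l \<in> {sum_list r0}"
      then show "l \<in> lengths [A, A+1, B, B+1] s" using r0 unfolding lengths_def by auto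
    qed
    then show ?thesis by blast
  qed
  then have "homogeneous_semigroup [A, A+1, B, B+1]"
    unfolding homogeneous_semigroup_def homogeneous_set_def by blast
  then show ?thesis unfolding A_def B_def .
qed

end
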